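(* Let $L:\mathbb{R}^k\times\mathcal{Y}\to\mathbb{R}_+$ be a polyhedral loss, and let $\mathcal{C}$ be a collection of polyhedral subsets of $\mathbb{R}^k$ such that for every $y\in\mathcal{Y}$, $L(\cdot,y)$ is affine on each $C\in\mathcal{C}$. Let $R=\bigcup\mathcal{C}$. Then for every $p\in\Delta_\mathcal{Y}$, $\arg\min_{u\in\mathbb{R}^k}L(u;p)\cap R=\bigcup\mathcal{F}$ for some family $\mathcal{F}$ of faces of members of $\mathcal{C}$.
   Context: $\mathcal{Y}$ is a finite label set (in the paper $\{-1,1\}^k$) and $\Delta_\mathcal{Y}$ the probability distributions on it; $L(u;p)=\sum_yp_yL(u,y)$. A loss is polyhedral if each $L(\cdot,y)$ is convex and piecewise linear (a maximum of finitely many affine functions). *)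

theory Defs
  imports "HOL-Analysis.Analysis"
begin

definition polyhedral_loss :: "(real^('k::finite) \<Rightarrow> 'y \<Rightarrow> real) \<Rightarrow> bool" where
  "polyhedral_loss L \<longleftrightarrow>
     (\<forall>y. convex_on UNIV (\<lambda>u. L u y) \<and>
          (\<exists>A :: ((real^'k) \<times> real) set. finite A \<and> A \<noteq> {} \<and>
             (\<forall>u. L u y = Max ((\<lambda>(a,b). a \<bullet> u + b) ` A))))"

definition prob_simplex :: "('y::finite \<Rightarrow> real) set" where
  "prob_simplex = {p. (\<forall>y. 0 \<le> p y) \<and> (\<Sum>y\<in>UNIV. p y) = 1}"

definition exp_loss :: "(real^('k::finite) \<Rightarrow> 'y::finite \<Rightarrow> real) \<Rightarrow> ('y \<Rightarrow> real) \<Rightarrow> real^'k \<Rightarrow> real" where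
  "exp_loss L p u = (\<Sum>y\<in>UNIV. p y * L u y)"

definition affine_on_set :: "(real^'k \<Rightarrow> real) \<Rightarrow> (real^'k) set \<Rightarrow> bool" where
  "affine_on_set f C \<longleftrightarrow> (\<exists>a b. \<forall>u\<in>C. f u = a \<bullet> u + b)"

end

theory Submission
  imports Defs
begin

lemma exp_affine:
  fixes L :: "real^('k::finite) \<Rightarrow> ('y::finite) \<Rightarrow> real"
  assumes "\<And>y. affine_on_set (\<lambda>u. L u y) C"
  shows "\<exists>a b. \<forall>u\<in>C. exp_loss L p u = a \<bullet> u + b"
proof -
  have "\<forall>y. \<exists>ab. \<forall>u\<in>C. L u y = fst ab \<bullet> u + snd ab"
    using assms unfolding affine_on_set_def by auto
  then obtain ab where ab: "\<And>y u. u \<in> C \<Longrightarrow> L u y = fst (ab y) \<bullet> u + snd (ab y)"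
    by metis
  show ?thesis
  proof (intro exI ballI)
    fix u assume u: "u \<in> C"
    have "exp_loss L p u = (\<Sum>y\<in>UNIV. p y * (fst (ab y) \<bullet> u + snd (ab y)))"
      unfolding exp_loss_def using ab[OF u] by simp
    also have "\<dots> = (\<Sum>y\<in>UNIV. p y *\<^sub>R fst (ab y)) \<bullet> u + (\<Sum>y\<in>UNIV. p y * snd (ab y))"
      by (simp add: inner_sum_left distrib_left sum.distrib)
    finally show "exp_loss L p u = (\<Sum>y\<in>UNIV. p y *\<^sub>R fst (ab y)) \<bullet> u + (\<Sum>y\<in>UNIV. p y * snd (ab y))" .
  qed
qed

theorem lemma4:
  fixes L :: "real^('k::finite) \<Rightarrow> ('y::finite) \<Rightarrow> real"
    and \<C> :: "(real^'k) set set"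
  assumes "polyhedral_loss L"
    and "\<And>u y. 0 \<le> L u y"
    and "\<And>C. C \<in> \<C> \<Longrightarrow> polyhedron C"
    and "\<And>C y. C \<in> \<C> \<Longrightarrow> affine_on_set (\<lambda>u. L u y) C"
  shows "\<forall>p \<in> prob_simplex.
           \<exists>\<F>. (\<forall>F\<in>\<F>. \<exists>C\<in>\<C>. F face_of C) \<and>
                {u. \<forall>v. exp_loss L p u \<le> exp_loss L p v} \<inter> \<Union>\<C> = \<Union>\<F>"
proof
  fix p :: "'y \<Rightarrow> real"
  define M where "M = {u. \<forall>v. exp_loss L p u \<le> exp_loss L p v}"
  have face: "M \<inter> C face_of C" if C: "C \<in> \<C>" for C
  proof (cases "M = {}")
    case True then show ?thesis by simp
  next
    case False
    then obtain u0 where u0: "u0 \<in> M" by blast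
    obtain a b where ab: "\<And>u. u \<in> C \<Longrightarrow> exp_loss L p u = a \<bullet> u + b"
      using exp_affine[of L C p] assms(4)[OF C] by blast
    have cvx: "convex C" using assms(3)[OF C] polyhedron_imp_convex by blast
    have le: "(-a) \<bullet> x \<le> b - exp_loss L p u0" if "x \<in> C" for x
    proof -
      have "exp_loss L p u0 \<le> exp_loss L p x" using u0 unfolding M_def by auto
      then show ?thesis using ab[OF that] by (simp add: inner_minus_left)
    qed
    have eq: "M \<inter> C = C \<inter> {x. (-a) \<bullet> x = b - exp_loss L p u0}"
    proof safe
      fix x assume "x \<in> M" "x \<in> C"
      then show "(-a) \<bullet> x = b - exp_loss L p u0"
      proof -
        have "exp_loss L p x \<le> exp_loss L p u0" "exp_loss L p u0 \<le> exp_loss L p x"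
          using \<open>x \<in> M\<close> u0 unfolding M_def by auto
        then show ?thesis using ab[OF \<open>x \<in> C\<close>] by (simp add: inner_minus_left)
      qed
    next
      fix x assume "x \<in> C" "(-a) \<bullet> x = b - exp_loss L p u0"
      then show "x \<in> M" using ab[of x] u0 unfolding M_def
        by (auto simp: inner_minus_left) (smt (verit))
    qed
    show ?thesis unfolding eq
      by (rule face_of_Int_supporting_hyperplane_le[OF cvx le])
  qed
  show "\<exists>\<F>. (\<forall>F\<in>\<F>. \<exists>C\<in>\<C>. F face_of C) \<and>
                {u. \<forall>v. exp_loss L p u \<le> exp_loss L p v} \<inter> \<Union>\<C> = \<Union>\<F>"
    unfolding M_def[symmetric]
    by (rule exI[of _ "(\<lambda>C. M \<inter> C) ` \<C>"]) (use face in auto)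
qed

end
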